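(* The geometric thickness of the complete bipartite graph $K_{6,6}$ is $\overline{\theta}(K_{6,6}) = 2$.
   Context: The geometric thickness $\overline{\theta}(G)$ of a graph $G$ is the smallest integer $k$ such that there is an injective placement of the vertices of $G$ at points of the plane, with each edge drawn as the straight line segment between the points of its endpoints and containing no other vertex point, together with an assignment of each edge to one of $k$ layers, such that no two edges assigned to the same layer cross (i.e., two edges in the same layer meet at most in a common endpoint). *)

theory Defs
  imports "HOL-Analysis.Analysis"
begin

text \<open>Graphs are given by a vertex set V and a set E of edges, each edge a
two-element subset of V.\<close>

definition edge_seg :: "('v \<Rightarrow> real \<times> real) \<Rightarrow> 'v set \<Rightarrow> (real \<times> real) set" where
  "edge_seg p e = convex hull (p ` e)"

definition geom_layered :: "'v set \<Rightarrow> 'v set set \<Rightarrow> nat \<Rightarrow> bool" where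
  "geom_layered V E k \<longleftrightarrow>
    (\<exists>p :: 'v \<Rightarrow> real \<times> real. \<exists>L :: 'v set \<Rightarrow> nat.
       inj_on p V \<and>
       (\<forall>e\<in>E. \<forall>w\<in>V. w \<notin> e \<longrightarrow> p w \<notin> edge_seg p e) \<and>
       (\<forall>e\<in>E. L e < k) \<and>
       (\<forall>e\<in>E. \<forall>e'\<in>E. e \<noteq> e' \<and> L e = L e' \<longrightarrow>
           edge_seg p e \<inter> edge_seg p e' \<subseteq> p ` (e \<inter> e')))"

definition geometric_thickness :: "'v set \<Rightarrow> 'v set set \<Rightarrow> nat" where
  "geometric_thickness V E = (LEAST k. geom_layered V E k)"

definition K66_V :: "(nat + nat) set" where
  "K66_V = Inl ` {..<6} \<union> Inr ` {..<6}"

definition K66_E :: "(nat + nat) set set" where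
  "K66_E = {{Inl i, Inr j} | i j. i < (6::nat) \<and> j < (6::nat)}"

end

theory Submission
  imports Defs "HOL-Computational_Algebra.Polynomial"
begin

definition Dt :: "real \<times> real \<Rightarrow> real \<times> real \<Rightarrow> real \<times> real \<Rightarrow> real" where
  "Dt a b c = (fst b - fst a) * (snd c - snd a) - (snd b - snd a) * (fst c - fst a)"

definition pos :: "real \<times> real \<Rightarrow> real \<times> real \<Rightarrow> real \<times> real \<Rightarrow> bool" where
  "pos a b c \<longleftrightarrow> Dt a b c > 0"

lemma Dt_rot: "Dt b c a = Dt a b c" by (simp add: Dt_def algebra_simps)
lemma Dt_swap: "Dt b a c = - Dt a b c" by (simp add: Dt_def algebra_simps)
lemma Dt_swap2: "Dt a c b = - Dt a b c" by (simp add: Dt_def algebra_simps)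

lemma seg_mem: "z \<in> closed_segment a b \<longleftrightarrow> (\<exists>u. 0 \<le> u \<and> u \<le> 1 \<and> z = (1 - u) *\<^sub>R a + u *\<^sub>R b)"
  by (auto simp: closed_segment_def)

lemma Dt_affine3: "Dt a b ((1 - u) *\<^sub>R c + u *\<^sub>R d) = (1 - u) * Dt a b c + u * Dt a b d"
  by (simp add: Dt_def algebra_simps)

lemma Dt_zero_seg: assumes "z \<in> closed_segment a b" shows "Dt a b z = 0"
proof -
  obtain u where u: "z = (1 - u) *\<^sub>R a + u *\<^sub>R b" using assms by (auto simp: seg_mem)
  show ?thesis unfolding u Dt_affine3 by (simp add: Dt_def)
qed

lemma Dt_seg_sign:
  assumes "z \<in> closed_segment c d" "Dt a b c > 0" "Dt a b d > 0"
  shows "Dt a b z > 0"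
proof -
  obtain u where u: "0 \<le> u" "u \<le> 1" "z = (1 - u) *\<^sub>R c + u *\<^sub>R d" using assms(1) by (auto simp: seg_mem)
  have "Dt a b z = (1 - u) * Dt a b c + u * Dt a b d" using u by (simp add: Dt_affine3)
  moreover have "(1 - u) * Dt a b c \<ge> 0" "u * Dt a b d \<ge> 0" using u assms by auto
  moreover have "(1 - u) * Dt a b c > 0 \<or> u * Dt a b d > 0" using u assms
    by (cases "u = 1") auto
  ultimately show ?thesis by linarith
qed

lemma sep_disjoint:
  assumes "Dt a x b * Dt a x y > 0"
  shows "closed_segment a x \<inter> closed_segment b y = {}"
proof (rule ccontr)
  assume "closed_segment a x \<inter> closed_segment b y \<noteq> {}"
  then obtain z where z: "z \<in> closed_segment a x" "z \<in> closed_segment b y" by auto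
  have 0: "Dt a x z = 0" using z(1) by (rule Dt_zero_seg)
  from assms have "(Dt a x b > 0 \<and> Dt a x y > 0) \<or> (Dt a x b < 0 \<and> Dt a x y < 0)"
    by (auto simp: zero_less_mult_iff)
  then show False
  proof
    assume "Dt a x b > 0 \<and> Dt a x y > 0"
    then show False using Dt_seg_sign[OF z(2), of a x] 0 by auto
  next
    assume h: "Dt a x b < 0 \<and> Dt a x y < 0"
    have "Dt x a b > 0" "Dt x a y > 0" using h by (auto simp: Dt_swap[of x a])
    then have "Dt x a z > 0" using Dt_seg_sign[OF z(2), of x a] by auto
    then show False using 0 by (simp add: Dt_swap[of x a])
  qed
qed

lemma not_on_seg: "Dt a b w \<noteq> 0 \<Longrightarrow> w \<notin> closed_segment a b"
  using Dt_zero_seg by blast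

lemma adj_seg:
  assumes "Dt a x y \<noteq> 0"
  shows "closed_segment a x \<inter> closed_segment a y \<subseteq> {a}"
proof
  fix z assume z: "z \<in> closed_segment a x \<inter> closed_segment a y"
  then obtain v where v: "0 \<le> v" "v \<le> 1" "z = (1 - v) *\<^sub>R a + v *\<^sub>R y" by (auto simp: seg_mem)
  have "Dt a x z = 0" using z Dt_zero_seg by blast
  moreover have "Dt a x z = (1 - v) * Dt a x a + v * Dt a x y" using v by (simp add: Dt_affine3)
  moreover have "Dt a x a = 0" by (simp add: Dt_def)
  ultimately have "v = 0" using assms by simp
  then show "z \<in> {a}" using v by simp
qed

lemma cross_seg:
  assumes "Dt a x b * Dt a x y < 0" "Dt b y a * Dt b y x < 0"
  shows "closed_segment a x \<inter> closed_segment b y \<noteq> {}"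
proof -
  define \<alpha> where "\<alpha> = Dt b y a"
  define \<beta> where "\<beta> = Dt b y x"
  define \<gamma> where "\<gamma> = Dt a x b"
  define \<delta> where "\<delta> = Dt a x y"
  have ab: "\<alpha> * \<beta> < 0" and gd: "\<gamma> * \<delta> < 0" using assms by (auto simp: \<alpha>_def \<beta>_def \<gamma>_def \<delta>_def)
  have ab0: "\<alpha> - \<beta> \<noteq> 0" using ab by (auto simp: mult_less_0_iff)
  have gd0: "\<gamma> - \<delta> \<noteq> 0" using gd by (auto simp: mult_less_0_iff)
  define s where "s = \<alpha> / (\<alpha> - \<beta>)"
  define t where "t = \<gamma> / (\<gamma> - \<delta>)"
  have s01: "0 \<le> s \<and> s \<le> 1" using ab ab0 unfolding s_def
    by (auto simp: mult_less_0_iff divide_simps)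
  have t01: "0 \<le> t \<and> t \<le> 1" using gd gd0 unfolding t_def
    by (auto simp: mult_less_0_iff divide_simps)
  have eq: "(1 - s) *\<^sub>R a + s *\<^sub>R x = (1 - t) *\<^sub>R b + t *\<^sub>R y"
  proof -
    have k: "\<alpha> - \<beta> = \<delta> - \<gamma>"
      unfolding \<alpha>_def \<beta>_def \<gamma>_def \<delta>_def by (simp add: Dt_def algebra_simps)
    show ?thesis
      using ab0 gd0 k unfolding s_def t_def \<alpha>_def \<beta>_def \<gamma>_def \<delta>_def
      apply (simp add: prod_eq_iff divide_simps)
      apply (simp add: Dt_def algebra_simps)
      done
  qed
  have m1: "(1 - s) *\<^sub>R a + s *\<^sub>R x \<in> closed_segment a x"
    unfolding seg_mem using s01 by blast
  have m2: "(1 - s) *\<^sub>R a + s *\<^sub>R x \<in> closed_segment b y"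
    unfolding seg_mem eq using t01 by blast
  show ?thesis using m1 m2 by blast
qed

lemma nz_perm: "Dt a b c \<noteq> 0 \<Longrightarrow> Dt b a c \<noteq> 0 \<and> Dt a c b \<noteq> 0 \<and> Dt b c a \<noteq> 0 \<and> Dt c a b \<noteq> 0 \<and> Dt c b a \<noteq> 0"
  by (simp add: Dt_def algebra_simps)

lemma pos_perm: assumes "Dt a b c \<noteq> 0"
  shows "(pos b c a \<longleftrightarrow> pos a b c) \<and> (pos c a b \<longleftrightarrow> pos a b c) \<and> (pos b a c \<longleftrightarrow> \<not> pos a b c)
     \<and> (pos a c b \<longleftrightarrow> \<not> pos a b c) \<and> (pos c b a \<longleftrightarrow> \<not> pos a b c)"
proof -
  have r1: "Dt b c a = Dt a b c" "Dt c a b = Dt a b c" by (rule Dt_rot)+ (simp add: Dt_def algebra_simps)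
  have r2: "Dt b a c = - Dt a b c" "Dt a c b = - Dt a b c" "Dt c b a = - Dt a b c"
    by (simp_all add: Dt_def algebra_simps)
  show ?thesis using assms unfolding pos_def r1 r2 by auto
qed

lemma sgn_prod:
  fixes x y :: real
  assumes "x \<noteq> 0" "y \<noteq> 0"
  shows "(x > 0 \<longleftrightarrow> y > 0) \<Longrightarrow> x * y > 0" and "\<not> (x > 0 \<longleftrightarrow> y > 0) \<Longrightarrow> x * y < 0"
  using assms by (auto simp: zero_less_mult_iff mult_less_0_iff)

lemma three_terms:
  fixes x1 y1 x2 y2 x3 y3 :: real
  assumes e: "x1*y1 - x2*y2 + x3*y3 = 0" and nz: "x1 \<noteq> 0" "y1 \<noteq> 0" "x2 \<noteq> 0" "y2 \<noteq> 0" "x3 \<noteq> 0" "y3 \<noteq> 0"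
  shows "\<not> (((x1 > 0 \<longleftrightarrow> y1 > 0) \<and> \<not> (x2 > 0 \<longleftrightarrow> y2 > 0) \<and> (x3 > 0 \<longleftrightarrow> y3 > 0)) \<or>
            (\<not> (x1 > 0 \<longleftrightarrow> y1 > 0) \<and> (x2 > 0 \<longleftrightarrow> y2 > 0) \<and> \<not> (x3 > 0 \<longleftrightarrow> y3 > 0)))"
proof
  assume "((x1 > 0 \<longleftrightarrow> y1 > 0) \<and> \<not> (x2 > 0 \<longleftrightarrow> y2 > 0) \<and> (x3 > 0 \<longleftrightarrow> y3 > 0)) \<or>
            (\<not> (x1 > 0 \<longleftrightarrow> y1 > 0) \<and> (x2 > 0 \<longleftrightarrow> y2 > 0) \<and> \<not> (x3 > 0 \<longleftrightarrow> y3 > 0))"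
  then show False
  proof
    assume h: "(x1 > 0 \<longleftrightarrow> y1 > 0) \<and> \<not> (x2 > 0 \<longleftrightarrow> y2 > 0) \<and> (x3 > 0 \<longleftrightarrow> y3 > 0)"
    have "x1 * y1 > 0" using h sgn_prod(1)[OF nz(1,2)] by blast
    moreover have "x2 * y2 < 0" using h sgn_prod(2)[OF nz(3,4)] by blast
    moreover have "x3 * y3 > 0" using h sgn_prod(1)[OF nz(5,6)] by blast
    ultimately show False using e by linarith
  next
    assume h: "\<not> (x1 > 0 \<longleftrightarrow> y1 > 0) \<and> (x2 > 0 \<longleftrightarrow> y2 > 0) \<and> \<not> (x3 > 0 \<longleftrightarrow> y3 > 0)"
    have "x1 * y1 < 0" using h sgn_prod(2)[OF nz(1,2)] by blast
    moreover have "x2 * y2 > 0" using h sgn_prod(1)[OF nz(3,4)] by blast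
    moreover have "x3 * y3 < 0" using h sgn_prod(2)[OF nz(5,6)] by blast
    ultimately show False using e by linarith
  qed
qed

lemma gp_pos:
  assumes "Dt a b c \<noteq> 0" "Dt a d e \<noteq> 0" "Dt a b d \<noteq> 0" "Dt a c e \<noteq> 0" "Dt a b e \<noteq> 0" "Dt a c d \<noteq> 0"
  shows "\<not> (((pos a b c \<longleftrightarrow> pos a d e) \<and> \<not> (pos a b d \<longleftrightarrow> pos a c e) \<and> (pos a b e \<longleftrightarrow> pos a c d)) \<or>
            (\<not> (pos a b c \<longleftrightarrow> pos a d e) \<and> (pos a b d \<longleftrightarrow> pos a c e) \<and> \<not> (pos a b e \<longleftrightarrow> pos a c d)))"
proof -
  have "Dt a b c * Dt a d e - Dt a b d * Dt a c e + Dt a b e * Dt a c d = 0"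
    by (simp add: Dt_def algebra_simps)
  from three_terms[OF this assms] show ?thesis unfolding pos_def .
qed

lemma four_pos:
  assumes "Dt b c d \<noteq> 0" "Dt a c d \<noteq> 0" "Dt a b d \<noteq> 0" "Dt a b c \<noteq> 0"
  shows "\<not> ((pos b c d \<and> \<not> pos a c d \<and> pos a b d \<and> \<not> pos a b c) \<or> (\<not> pos b c d \<and> pos a c d \<and> \<not> pos a b d \<and> pos a b c))"
proof -
  have "Dt b c d - Dt a c d + Dt a b d - Dt a b c = 0"
    by (simp add: Dt_def algebra_simps)
  then show ?thesis using assms unfolding pos_def
    by (smt (verit))
qed

lemma cross_pos:
  assumes "Dt a x b \<noteq> 0" "Dt a x y \<noteq> 0" "Dt b y a \<noteq> 0" "Dt b y x \<noteq> 0"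
    "closed_segment a x \<inter> closed_segment b y = {}"
  shows "\<not> ((pos a x b \<noteq> pos a x y) \<and> (pos b y a \<noteq> pos b y x))"
proof
  assume h: "(pos a x b \<noteq> pos a x y) \<and> (pos b y a \<noteq> pos b y x)"
  have "Dt a x b * Dt a x y < 0" using h assms(1,2) unfolding pos_def
    by (auto simp: mult_less_0_iff)
  moreover have "Dt b y a * Dt b y x < 0" using h assms(3,4) unfolding pos_def
    by (auto simp: mult_less_0_iff)
  ultimately show False using cross_seg assms(5) by blast
qed

lemma nz_bca: "Dt a b c \<noteq> 0 \<Longrightarrow> Dt b c a \<noteq> 0" by (simp add: Dt_def algebra_simps)
lemma nz_cab: "Dt a b c \<noteq> 0 \<Longrightarrow> Dt c a b \<noteq> 0" by (simp add: Dt_def algebra_simps)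
lemma nz_bac: "Dt a b c \<noteq> 0 \<Longrightarrow> Dt b a c \<noteq> 0" by (simp add: Dt_def algebra_simps)
lemma nz_acb: "Dt a b c \<noteq> 0 \<Longrightarrow> Dt a c b \<noteq> 0" by (simp add: Dt_def algebra_simps)
lemma nz_cba: "Dt a b c \<noteq> 0 \<Longrightarrow> Dt c b a \<noteq> 0" by (simp add: Dt_def algebra_simps)
lemma pos_bca: "Dt a b c \<noteq> 0 \<Longrightarrow> pos b c a = pos a b c"
proof -
  have "Dt b c a = Dt a b c" by (simp add: Dt_def algebra_simps)
  then show "pos b c a = pos a b c" by (simp add: pos_def)
qed
lemma pos_cab: "Dt a b c \<noteq> 0 \<Longrightarrow> pos c a b = pos a b c"
proof -
  have "Dt c a b = Dt a b c" by (simp add: Dt_def algebra_simps)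
  then show "pos c a b = pos a b c" by (simp add: pos_def)
qed
lemma pos_bac: assumes "Dt a b c \<noteq> 0" shows "pos b a c = (\<not> pos a b c)"
proof -
  have "Dt b a c = - Dt a b c" by (simp add: Dt_def algebra_simps)
  then show ?thesis using assms by (auto simp: pos_def)
qed
lemma pos_acb: assumes "Dt a b c \<noteq> 0" shows "pos a c b = (\<not> pos a b c)"
proof -
  have "Dt a c b = - Dt a b c" by (simp add: Dt_def algebra_simps)
  then show ?thesis using assms by (auto simp: pos_def)
qed
lemma pos_cba: assumes "Dt a b c \<noteq> 0" shows "pos c b a = (\<not> pos a b c)"
proof -
  have "Dt c b a = - Dt a b c" by (simp add: Dt_def algebra_simps)
  then show ?thesis using assms by (auto simp: pos_def)
qed

lemma core_prop:
  assumes "\<not> (((Q012q \<longleftrightarrow> Q245q) \<and> \<not> ((\<not> Q024q) \<longleftrightarrow> (\<not> Q125q)) \<and> ((\<not> Q025q) \<longleftrightarrow> (\<not> Q124q))) \<or> (\<not> (Q012q \<longleftrightarrow> Q245q) \<and> ((\<not> Q024q) \<longleftrightarrow> (\<not> Q125q)) \<and> \<not> ((\<not> Q025q) \<longleftrightarrow> (\<not> Q124q))))"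
    and "\<not> (((Q012q \<longleftrightarrow> Q045q) \<and> \<not> (Q014q \<longleftrightarrow> Q025q) \<and> (Q015q \<longleftrightarrow> Q024q)) \<or> (\<not> (Q012q \<longleftrightarrow> Q045q) \<and> (Q014q \<longleftrightarrow> Q025q) \<and> \<not> (Q015q \<longleftrightarrow> Q024q)))"
    and "\<not> (((Q023q \<longleftrightarrow> Q345q) \<and> \<not> ((\<not> Q034q) \<longleftrightarrow> (\<not> Q235q)) \<and> ((\<not> Q035q) \<longleftrightarrow> (\<not> Q234q))) \<or> (\<not> (Q023q \<longleftrightarrow> Q345q) \<and> ((\<not> Q034q) \<longleftrightarrow> (\<not> Q235q)) \<and> \<not> ((\<not> Q035q) \<longleftrightarrow> (\<not> Q234q))))"
    and "\<not> (((Q024q \<longleftrightarrow> (\<not> Q345q)) \<and> \<not> (Q034q \<longleftrightarrow> (\<not> Q245q)) \<and> ((\<not> Q045q) \<longleftrightarrow> Q234q)) \<or> (\<not> (Q024q \<longleftrightarrow> (\<not> Q345q)) \<and> (Q034q \<longleftrightarrow> (\<not> Q245q)) \<and> \<not> ((\<not> Q045q) \<longleftrightarrow> Q234q)))"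
    and "\<not> (((Q014q \<longleftrightarrow> (\<not> Q345q)) \<and> \<not> (Q034q \<longleftrightarrow> (\<not> Q145q)) \<and> ((\<not> Q045q) \<longleftrightarrow> Q134q)) \<or> (\<not> (Q014q \<longleftrightarrow> (\<not> Q345q)) \<and> (Q034q \<longleftrightarrow> (\<not> Q145q)) \<and> \<not> ((\<not> Q045q) \<longleftrightarrow> Q134q)))"
    and "\<not> (((Q125q \<longleftrightarrow> Q345q) \<and> \<not> (Q135q \<longleftrightarrow> Q245q) \<and> (Q145q \<longleftrightarrow> Q235q)) \<or> (\<not> (Q125q \<longleftrightarrow> Q345q) \<and> (Q135q \<longleftrightarrow> Q245q) \<and> \<not> (Q145q \<longleftrightarrow> Q235q)))"
    and "\<not> (((Q015q \<longleftrightarrow> Q235q) \<and> \<not> (Q025q \<longleftrightarrow> Q135q) \<and> (Q035q \<longleftrightarrow> Q125q)) \<or> (\<not> (Q015q \<longleftrightarrow> Q235q) \<and> (Q025q \<longleftrightarrow> Q135q) \<and> \<not> (Q035q \<longleftrightarrow> Q125q)))"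
    and "\<not> ((((\<not> Q012q) \<longleftrightarrow> Q145q) \<and> \<not> ((\<not> Q014q) \<longleftrightarrow> Q125q) \<and> ((\<not> Q015q) \<longleftrightarrow> Q124q)) \<or> (\<not> ((\<not> Q012q) \<longleftrightarrow> Q145q) \<and> ((\<not> Q014q) \<longleftrightarrow> Q125q) \<and> \<not> ((\<not> Q015q) \<longleftrightarrow> Q124q)))"
    and "\<not> (((Q013q \<longleftrightarrow> (\<not> Q234q)) \<and> \<not> (Q023q \<longleftrightarrow> (\<not> Q134q)) \<and> ((\<not> Q034q) \<longleftrightarrow> Q123q)) \<or> (\<not> (Q013q \<longleftrightarrow> (\<not> Q234q)) \<and> (Q023q \<longleftrightarrow> (\<not> Q134q)) \<and> \<not> ((\<not> Q034q) \<longleftrightarrow> Q123q)))"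
    and "\<not> (((Q012q \<longleftrightarrow> Q234q) \<and> \<not> ((\<not> Q023q) \<longleftrightarrow> (\<not> Q124q)) \<and> ((\<not> Q024q) \<longleftrightarrow> (\<not> Q123q))) \<or> (\<not> (Q012q \<longleftrightarrow> Q234q) \<and> ((\<not> Q023q) \<longleftrightarrow> (\<not> Q124q)) \<and> \<not> ((\<not> Q024q) \<longleftrightarrow> (\<not> Q123q))))"
    and "\<not> (((Q013q \<longleftrightarrow> (\<not> Q235q)) \<and> \<not> (Q023q \<longleftrightarrow> (\<not> Q135q)) \<and> ((\<not> Q035q) \<longleftrightarrow> Q123q)) \<or> (\<not> (Q013q \<longleftrightarrow> (\<not> Q235q)) \<and> (Q023q \<longleftrightarrow> (\<not> Q135q)) \<and> \<not> ((\<not> Q035q) \<longleftrightarrow> Q123q)))"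
    and "\<not> (((Q013q \<longleftrightarrow> Q345q) \<and> \<not> ((\<not> Q034q) \<longleftrightarrow> (\<not> Q135q)) \<and> ((\<not> Q035q) \<longleftrightarrow> (\<not> Q134q))) \<or> (\<not> (Q013q \<longleftrightarrow> Q345q) \<and> ((\<not> Q034q) \<longleftrightarrow> (\<not> Q135q)) \<and> \<not> ((\<not> Q035q) \<longleftrightarrow> (\<not> Q134q))))"
    and "\<not> (((Q012q \<longleftrightarrow> Q235q) \<and> \<not> ((\<not> Q023q) \<longleftrightarrow> (\<not> Q125q)) \<and> ((\<not> Q025q) \<longleftrightarrow> (\<not> Q123q))) \<or> (\<not> (Q012q \<longleftrightarrow> Q235q) \<and> ((\<not> Q023q) \<longleftrightarrow> (\<not> Q125q)) \<and> \<not> ((\<not> Q025q) \<longleftrightarrow> (\<not> Q123q))))"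
    and "\<not> (((Q123q \<longleftrightarrow> Q145q) \<and> \<not> (Q124q \<longleftrightarrow> Q135q) \<and> (Q125q \<longleftrightarrow> Q134q)) \<or> (\<not> (Q123q \<longleftrightarrow> Q145q) \<and> (Q124q \<longleftrightarrow> Q135q) \<and> \<not> (Q125q \<longleftrightarrow> Q134q)))"
    and "\<not> ((Q345q \<and> \<not> Q145q \<and> Q135q \<and> \<not> Q134q) \<or> (\<not> Q345q \<and> Q145q \<and> \<not> Q135q \<and> Q134q))"
    and "\<not> (((\<not> Q013q) \<noteq> Q034q) \<and> (Q014q \<noteq> (\<not> Q134q)))"
    and "\<not> (((\<not> Q013q) \<noteq> Q035q) \<and> (Q015q \<noteq> (\<not> Q135q)))"
    and "\<not> (((\<not> Q014q) \<noteq> (\<not> Q034q)) \<and> (Q013q \<noteq> Q134q))"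
    and "\<not> (((\<not> Q014q) \<noteq> Q045q) \<and> (Q015q \<noteq> (\<not> Q145q)))"
    and "\<not> (((\<not> Q015q) \<noteq> (\<not> Q035q)) \<and> (Q013q \<noteq> Q135q))"
    and "\<not> (((\<not> Q015q) \<noteq> (\<not> Q045q)) \<and> (Q014q \<noteq> Q145q))"
    and "\<not> (((\<not> Q023q) \<noteq> Q034q) \<and> (Q024q \<noteq> (\<not> Q234q)))"
    and "\<not> (((\<not> Q023q) \<noteq> Q035q) \<and> (Q025q \<noteq> (\<not> Q235q)))"
    and "\<not> (((\<not> Q024q) \<noteq> (\<not> Q034q)) \<and> (Q023q \<noteq> Q234q))"
    and "\<not> (((\<not> Q024q) \<noteq> Q045q) \<and> (Q025q \<noteq> (\<not> Q245q)))"
    and "\<not> (((\<not> Q025q) \<noteq> (\<not> Q035q)) \<and> (Q023q \<noteq> Q235q))"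
    and "\<not> (((\<not> Q025q) \<noteq> (\<not> Q045q)) \<and> (Q024q \<noteq> Q245q))"
    and "\<not> (((\<not> Q123q) \<noteq> Q134q) \<and> (Q124q \<noteq> (\<not> Q234q)))"
    and "\<not> (((\<not> Q123q) \<noteq> Q135q) \<and> (Q125q \<noteq> (\<not> Q235q)))"
    and "\<not> (((\<not> Q124q) \<noteq> (\<not> Q134q)) \<and> (Q123q \<noteq> Q234q))"
    and "\<not> (((\<not> Q124q) \<noteq> Q145q) \<and> (Q125q \<noteq> (\<not> Q245q)))"
    and "\<not> (((\<not> Q125q) \<noteq> (\<not> Q135q)) \<and> (Q123q \<noteq> Q235q))"
    and "\<not> (((\<not> Q125q) \<noteq> (\<not> Q145q)) \<and> (Q124q \<noteq> Q245q))"
  shows False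
  using assms by sat

lemma core_K33:
  fixes p0 p1 p2 p3 p4 p5 :: "real \<times> real"
  assumes
    n_012: "Dt p0 p1 p2 \<noteq> 0"
    and n_013: "Dt p0 p1 p3 \<noteq> 0"
    and n_014: "Dt p0 p1 p4 \<noteq> 0"
    and n_015: "Dt p0 p1 p5 \<noteq> 0"
    and n_023: "Dt p0 p2 p3 \<noteq> 0"
    and n_024: "Dt p0 p2 p4 \<noteq> 0"
    and n_025: "Dt p0 p2 p5 \<noteq> 0"
    and n_034: "Dt p0 p3 p4 \<noteq> 0"
    and n_035: "Dt p0 p3 p5 \<noteq> 0"
    and n_045: "Dt p0 p4 p5 \<noteq> 0"
    and n_123: "Dt p1 p2 p3 \<noteq> 0"
    and n_124: "Dt p1 p2 p4 \<noteq> 0"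
    and n_125: "Dt p1 p2 p5 \<noteq> 0"
    and n_134: "Dt p1 p3 p4 \<noteq> 0"
    and n_135: "Dt p1 p3 p5 \<noteq> 0"
    and n_145: "Dt p1 p4 p5 \<noteq> 0"
    and n_234: "Dt p2 p3 p4 \<noteq> 0"
    and n_235: "Dt p2 p3 p5 \<noteq> 0"
    and n_245: "Dt p2 p4 p5 \<noteq> 0"
    and n_345: "Dt p3 p4 p5 \<noteq> 0"
    and d_0314: "closed_segment p0 p3 \<inter> closed_segment p1 p4 = {}"
    and d_0315: "closed_segment p0 p3 \<inter> closed_segment p1 p5 = {}"
    and d_0413: "closed_segment p0 p4 \<inter> closed_segment p1 p3 = {}"
    and d_0415: "closed_segment p0 p4 \<inter> closed_segment p1 p5 = {}"
    and d_0513: "closed_segment p0 p5 \<inter> closed_segment p1 p3 = {}"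
    and d_0514: "closed_segment p0 p5 \<inter> closed_segment p1 p4 = {}"
    and d_0324: "closed_segment p0 p3 \<inter> closed_segment p2 p4 = {}"
    and d_0325: "closed_segment p0 p3 \<inter> closed_segment p2 p5 = {}"
    and d_0423: "closed_segment p0 p4 \<inter> closed_segment p2 p3 = {}"
    and d_0425: "closed_segment p0 p4 \<inter> closed_segment p2 p5 = {}"
    and d_0523: "closed_segment p0 p5 \<inter> closed_segment p2 p3 = {}"
    and d_0524: "closed_segment p0 p5 \<inter> closed_segment p2 p4 = {}"
    and d_1324: "closed_segment p1 p3 \<inter> closed_segment p2 p4 = {}"
    and d_1325: "closed_segment p1 p3 \<inter> closed_segment p2 p5 = {}"
    and d_1423: "closed_segment p1 p4 \<inter> closed_segment p2 p3 = {}"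
    and d_1425: "closed_segment p1 p4 \<inter> closed_segment p2 p5 = {}"
    and d_1523: "closed_segment p1 p5 \<inter> closed_segment p2 p3 = {}"
    and d_1524: "closed_segment p1 p5 \<inter> closed_segment p2 p4 = {}"
  shows False
proof -
  have n_021: "Dt p0 p2 p1 \<noteq> 0" by (rule nz_acb[OF n_012])
  have n_031: "Dt p0 p3 p1 \<noteq> 0" by (rule nz_acb[OF n_013])
  have n_032: "Dt p0 p3 p2 \<noteq> 0" by (rule nz_acb[OF n_023])
  have n_041: "Dt p0 p4 p1 \<noteq> 0" by (rule nz_acb[OF n_014])
  have n_042: "Dt p0 p4 p2 \<noteq> 0" by (rule nz_acb[OF n_024])
  have n_043: "Dt p0 p4 p3 \<noteq> 0" by (rule nz_acb[OF n_034])
  have n_051: "Dt p0 p5 p1 \<noteq> 0" by (rule nz_acb[OF n_015])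
  have n_052: "Dt p0 p5 p2 \<noteq> 0" by (rule nz_acb[OF n_025])
  have n_053: "Dt p0 p5 p3 \<noteq> 0" by (rule nz_acb[OF n_035])
  have n_054: "Dt p0 p5 p4 \<noteq> 0" by (rule nz_acb[OF n_045])
  have n_102: "Dt p1 p0 p2 \<noteq> 0" by (rule nz_bac[OF n_012])
  have n_103: "Dt p1 p0 p3 \<noteq> 0" by (rule nz_bac[OF n_013])
  have n_104: "Dt p1 p0 p4 \<noteq> 0" by (rule nz_bac[OF n_014])
  have n_105: "Dt p1 p0 p5 \<noteq> 0" by (rule nz_bac[OF n_015])
  have n_120: "Dt p1 p2 p0 \<noteq> 0" by (rule nz_bca[OF n_012])
  have n_130: "Dt p1 p3 p0 \<noteq> 0" by (rule nz_bca[OF n_013])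
  have n_132: "Dt p1 p3 p2 \<noteq> 0" by (rule nz_acb[OF n_123])
  have n_140: "Dt p1 p4 p0 \<noteq> 0" by (rule nz_bca[OF n_014])
  have n_142: "Dt p1 p4 p2 \<noteq> 0" by (rule nz_acb[OF n_124])
  have n_143: "Dt p1 p4 p3 \<noteq> 0" by (rule nz_acb[OF n_134])
  have n_150: "Dt p1 p5 p0 \<noteq> 0" by (rule nz_bca[OF n_015])
  have n_152: "Dt p1 p5 p2 \<noteq> 0" by (rule nz_acb[OF n_125])
  have n_153: "Dt p1 p5 p3 \<noteq> 0" by (rule nz_acb[OF n_135])
  have n_154: "Dt p1 p5 p4 \<noteq> 0" by (rule nz_acb[OF n_145])
  have n_201: "Dt p2 p0 p1 \<noteq> 0" by (rule nz_cab[OF n_012])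
  have n_203: "Dt p2 p0 p3 \<noteq> 0" by (rule nz_bac[OF n_023])
  have n_204: "Dt p2 p0 p4 \<noteq> 0" by (rule nz_bac[OF n_024])
  have n_205: "Dt p2 p0 p5 \<noteq> 0" by (rule nz_bac[OF n_025])
  have n_210: "Dt p2 p1 p0 \<noteq> 0" by (rule nz_cba[OF n_012])
  have n_213: "Dt p2 p1 p3 \<noteq> 0" by (rule nz_bac[OF n_123])
  have n_214: "Dt p2 p1 p4 \<noteq> 0" by (rule nz_bac[OF n_124])
  have n_215: "Dt p2 p1 p5 \<noteq> 0" by (rule nz_bac[OF n_125])
  have n_230: "Dt p2 p3 p0 \<noteq> 0" by (rule nz_bca[OF n_023])
  have n_231: "Dt p2 p3 p1 \<noteq> 0" by (rule nz_bca[OF n_123])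
  have n_240: "Dt p2 p4 p0 \<noteq> 0" by (rule nz_bca[OF n_024])
  have n_241: "Dt p2 p4 p1 \<noteq> 0" by (rule nz_bca[OF n_124])
  have n_243: "Dt p2 p4 p3 \<noteq> 0" by (rule nz_acb[OF n_234])
  have n_250: "Dt p2 p5 p0 \<noteq> 0" by (rule nz_bca[OF n_025])
  have n_251: "Dt p2 p5 p1 \<noteq> 0" by (rule nz_bca[OF n_125])
  have n_253: "Dt p2 p5 p3 \<noteq> 0" by (rule nz_acb[OF n_235])
  have n_254: "Dt p2 p5 p4 \<noteq> 0" by (rule nz_acb[OF n_245])
  have n_301: "Dt p3 p0 p1 \<noteq> 0" by (rule nz_cab[OF n_013])
  have n_302: "Dt p3 p0 p2 \<noteq> 0" by (rule nz_cab[OF n_023])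
  have n_304: "Dt p3 p0 p4 \<noteq> 0" by (rule nz_bac[OF n_034])
  have n_305: "Dt p3 p0 p5 \<noteq> 0" by (rule nz_bac[OF n_035])
  have n_310: "Dt p3 p1 p0 \<noteq> 0" by (rule nz_cba[OF n_013])
  have n_312: "Dt p3 p1 p2 \<noteq> 0" by (rule nz_cab[OF n_123])
  have n_314: "Dt p3 p1 p4 \<noteq> 0" by (rule nz_bac[OF n_134])
  have n_315: "Dt p3 p1 p5 \<noteq> 0" by (rule nz_bac[OF n_135])
  have n_320: "Dt p3 p2 p0 \<noteq> 0" by (rule nz_cba[OF n_023])
  have n_321: "Dt p3 p2 p1 \<noteq> 0" by (rule nz_cba[OF n_123])
  have n_324: "Dt p3 p2 p4 \<noteq> 0" by (rule nz_bac[OF n_234])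
  have n_325: "Dt p3 p2 p5 \<noteq> 0" by (rule nz_bac[OF n_235])
  have n_340: "Dt p3 p4 p0 \<noteq> 0" by (rule nz_bca[OF n_034])
  have n_341: "Dt p3 p4 p1 \<noteq> 0" by (rule nz_bca[OF n_134])
  have n_342: "Dt p3 p4 p2 \<noteq> 0" by (rule nz_bca[OF n_234])
  have n_350: "Dt p3 p5 p0 \<noteq> 0" by (rule nz_bca[OF n_035])
  have n_351: "Dt p3 p5 p1 \<noteq> 0" by (rule nz_bca[OF n_135])
  have n_352: "Dt p3 p5 p2 \<noteq> 0" by (rule nz_bca[OF n_235])
  have n_354: "Dt p3 p5 p4 \<noteq> 0" by (rule nz_acb[OF n_345])
  have n_401: "Dt p4 p0 p1 \<noteq> 0" by (rule nz_cab[OF n_014])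
  have n_402: "Dt p4 p0 p2 \<noteq> 0" by (rule nz_cab[OF n_024])
  have n_403: "Dt p4 p0 p3 \<noteq> 0" by (rule nz_cab[OF n_034])
  have n_405: "Dt p4 p0 p5 \<noteq> 0" by (rule nz_bac[OF n_045])
  have n_410: "Dt p4 p1 p0 \<noteq> 0" by (rule nz_cba[OF n_014])
  have n_412: "Dt p4 p1 p2 \<noteq> 0" by (rule nz_cab[OF n_124])
  have n_413: "Dt p4 p1 p3 \<noteq> 0" by (rule nz_cab[OF n_134])
  have n_415: "Dt p4 p1 p5 \<noteq> 0" by (rule nz_bac[OF n_145])
  have n_420: "Dt p4 p2 p0 \<noteq> 0" by (rule nz_cba[OF n_024])
  have n_421: "Dt p4 p2 p1 \<noteq> 0" by (rule nz_cba[OF n_124])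
  have n_423: "Dt p4 p2 p3 \<noteq> 0" by (rule nz_cab[OF n_234])
  have n_425: "Dt p4 p2 p5 \<noteq> 0" by (rule nz_bac[OF n_245])
  have n_430: "Dt p4 p3 p0 \<noteq> 0" by (rule nz_cba[OF n_034])
  have n_431: "Dt p4 p3 p1 \<noteq> 0" by (rule nz_cba[OF n_134])
  have n_432: "Dt p4 p3 p2 \<noteq> 0" by (rule nz_cba[OF n_234])
  have n_435: "Dt p4 p3 p5 \<noteq> 0" by (rule nz_bac[OF n_345])
  have n_450: "Dt p4 p5 p0 \<noteq> 0" by (rule nz_bca[OF n_045])
  have n_451: "Dt p4 p5 p1 \<noteq> 0" by (rule nz_bca[OF n_145])
  have n_452: "Dt p4 p5 p2 \<noteq> 0" by (rule nz_bca[OF n_245])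
  have n_453: "Dt p4 p5 p3 \<noteq> 0" by (rule nz_bca[OF n_345])
  have n_501: "Dt p5 p0 p1 \<noteq> 0" by (rule nz_cab[OF n_015])
  have n_502: "Dt p5 p0 p2 \<noteq> 0" by (rule nz_cab[OF n_025])
  have n_503: "Dt p5 p0 p3 \<noteq> 0" by (rule nz_cab[OF n_035])
  have n_504: "Dt p5 p0 p4 \<noteq> 0" by (rule nz_cab[OF n_045])
  have n_510: "Dt p5 p1 p0 \<noteq> 0" by (rule nz_cba[OF n_015])
  have n_512: "Dt p5 p1 p2 \<noteq> 0" by (rule nz_cab[OF n_125])
  have n_513: "Dt p5 p1 p3 \<noteq> 0" by (rule nz_cab[OF n_135])
  have n_514: "Dt p5 p1 p4 \<noteq> 0" by (rule nz_cab[OF n_145])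
  have n_520: "Dt p5 p2 p0 \<noteq> 0" by (rule nz_cba[OF n_025])
  have n_521: "Dt p5 p2 p1 \<noteq> 0" by (rule nz_cba[OF n_125])
  have n_523: "Dt p5 p2 p3 \<noteq> 0" by (rule nz_cab[OF n_235])
  have n_524: "Dt p5 p2 p4 \<noteq> 0" by (rule nz_cab[OF n_245])
  have n_530: "Dt p5 p3 p0 \<noteq> 0" by (rule nz_cba[OF n_035])
  have n_531: "Dt p5 p3 p1 \<noteq> 0" by (rule nz_cba[OF n_135])
  have n_532: "Dt p5 p3 p2 \<noteq> 0" by (rule nz_cba[OF n_235])
  have n_534: "Dt p5 p3 p4 \<noteq> 0" by (rule nz_cab[OF n_345])
  have n_540: "Dt p5 p4 p0 \<noteq> 0" by (rule nz_cba[OF n_045])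
  have n_541: "Dt p5 p4 p1 \<noteq> 0" by (rule nz_cba[OF n_145])
  have n_542: "Dt p5 p4 p2 \<noteq> 0" by (rule nz_cba[OF n_245])
  have n_543: "Dt p5 p4 p3 \<noteq> 0" by (rule nz_cba[OF n_345])
  have r_021: "pos p0 p2 p1 = (\<not> pos p0 p1 p2)" by (rule pos_acb[OF n_012])
  have r_031: "pos p0 p3 p1 = (\<not> pos p0 p1 p3)" by (rule pos_acb[OF n_013])
  have r_032: "pos p0 p3 p2 = (\<not> pos p0 p2 p3)" by (rule pos_acb[OF n_023])
  have r_041: "pos p0 p4 p1 = (\<not> pos p0 p1 p4)" by (rule pos_acb[OF n_014])
  have r_042: "pos p0 p4 p2 = (\<not> pos p0 p2 p4)" by (rule pos_acb[OF n_024])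
  have r_043: "pos p0 p4 p3 = (\<not> pos p0 p3 p4)" by (rule pos_acb[OF n_034])
  have r_051: "pos p0 p5 p1 = (\<not> pos p0 p1 p5)" by (rule pos_acb[OF n_015])
  have r_052: "pos p0 p5 p2 = (\<not> pos p0 p2 p5)" by (rule pos_acb[OF n_025])
  have r_053: "pos p0 p5 p3 = (\<not> pos p0 p3 p5)" by (rule pos_acb[OF n_035])
  have r_054: "pos p0 p5 p4 = (\<not> pos p0 p4 p5)" by (rule pos_acb[OF n_045])
  have r_102: "pos p1 p0 p2 = (\<not> pos p0 p1 p2)" by (rule pos_bac[OF n_012])
  have r_103: "pos p1 p0 p3 = (\<not> pos p0 p1 p3)" by (rule pos_bac[OF n_013])
  have r_104: "pos p1 p0 p4 = (\<not> pos p0 p1 p4)" by (rule pos_bac[OF n_014])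
  have r_105: "pos p1 p0 p5 = (\<not> pos p0 p1 p5)" by (rule pos_bac[OF n_015])
  have r_120: "pos p1 p2 p0 = pos p0 p1 p2" by (rule pos_bca[OF n_012])
  have r_130: "pos p1 p3 p0 = pos p0 p1 p3" by (rule pos_bca[OF n_013])
  have r_132: "pos p1 p3 p2 = (\<not> pos p1 p2 p3)" by (rule pos_acb[OF n_123])
  have r_140: "pos p1 p4 p0 = pos p0 p1 p4" by (rule pos_bca[OF n_014])
  have r_142: "pos p1 p4 p2 = (\<not> pos p1 p2 p4)" by (rule pos_acb[OF n_124])
  have r_143: "pos p1 p4 p3 = (\<not> pos p1 p3 p4)" by (rule pos_acb[OF n_134])
  have r_150: "pos p1 p5 p0 = pos p0 p1 p5" by (rule pos_bca[OF n_015])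
  have r_152: "pos p1 p5 p2 = (\<not> pos p1 p2 p5)" by (rule pos_acb[OF n_125])
  have r_153: "pos p1 p5 p3 = (\<not> pos p1 p3 p5)" by (rule pos_acb[OF n_135])
  have r_154: "pos p1 p5 p4 = (\<not> pos p1 p4 p5)" by (rule pos_acb[OF n_145])
  have r_201: "pos p2 p0 p1 = pos p0 p1 p2" by (rule pos_cab[OF n_012])
  have r_203: "pos p2 p0 p3 = (\<not> pos p0 p2 p3)" by (rule pos_bac[OF n_023])
  have r_204: "pos p2 p0 p4 = (\<not> pos p0 p2 p4)" by (rule pos_bac[OF n_024])
  have r_205: "pos p2 p0 p5 = (\<not> pos p0 p2 p5)" by (rule pos_bac[OF n_025])
  have r_210: "pos p2 p1 p0 = (\<not> pos p0 p1 p2)" by (rule pos_cba[OF n_012])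
  have r_213: "pos p2 p1 p3 = (\<not> pos p1 p2 p3)" by (rule pos_bac[OF n_123])
  have r_214: "pos p2 p1 p4 = (\<not> pos p1 p2 p4)" by (rule pos_bac[OF n_124])
  have r_215: "pos p2 p1 p5 = (\<not> pos p1 p2 p5)" by (rule pos_bac[OF n_125])
  have r_230: "pos p2 p3 p0 = pos p0 p2 p3" by (rule pos_bca[OF n_023])
  have r_231: "pos p2 p3 p1 = pos p1 p2 p3" by (rule pos_bca[OF n_123])
  have r_240: "pos p2 p4 p0 = pos p0 p2 p4" by (rule pos_bca[OF n_024])
  have r_241: "pos p2 p4 p1 = pos p1 p2 p4" by (rule pos_bca[OF n_124])
  have r_243: "pos p2 p4 p3 = (\<not> pos p2 p3 p4)" by (rule pos_acb[OF n_234])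
  have r_250: "pos p2 p5 p0 = pos p0 p2 p5" by (rule pos_bca[OF n_025])
  have r_251: "pos p2 p5 p1 = pos p1 p2 p5" by (rule pos_bca[OF n_125])
  have r_253: "pos p2 p5 p3 = (\<not> pos p2 p3 p5)" by (rule pos_acb[OF n_235])
  have r_254: "pos p2 p5 p4 = (\<not> pos p2 p4 p5)" by (rule pos_acb[OF n_245])
  have r_301: "pos p3 p0 p1 = pos p0 p1 p3" by (rule pos_cab[OF n_013])
  have r_302: "pos p3 p0 p2 = pos p0 p2 p3" by (rule pos_cab[OF n_023])
  have r_304: "pos p3 p0 p4 = (\<not> pos p0 p3 p4)" by (rule pos_bac[OF n_034])
  have r_305: "pos p3 p0 p5 = (\<not> pos p0 p3 p5)" by (rule pos_bac[OF n_035])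
  have r_310: "pos p3 p1 p0 = (\<not> pos p0 p1 p3)" by (rule pos_cba[OF n_013])
  have r_312: "pos p3 p1 p2 = pos p1 p2 p3" by (rule pos_cab[OF n_123])
  have r_314: "pos p3 p1 p4 = (\<not> pos p1 p3 p4)" by (rule pos_bac[OF n_134])
  have r_315: "pos p3 p1 p5 = (\<not> pos p1 p3 p5)" by (rule pos_bac[OF n_135])
  have r_320: "pos p3 p2 p0 = (\<not> pos p0 p2 p3)" by (rule pos_cba[OF n_023])
  have r_321: "pos p3 p2 p1 = (\<not> pos p1 p2 p3)" by (rule pos_cba[OF n_123])
  have r_324: "pos p3 p2 p4 = (\<not> pos p2 p3 p4)" by (rule pos_bac[OF n_234])
  have r_325: "pos p3 p2 p5 = (\<not> pos p2 p3 p5)" by (rule pos_bac[OF n_235])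
  have r_340: "pos p3 p4 p0 = pos p0 p3 p4" by (rule pos_bca[OF n_034])
  have r_341: "pos p3 p4 p1 = pos p1 p3 p4" by (rule pos_bca[OF n_134])
  have r_342: "pos p3 p4 p2 = pos p2 p3 p4" by (rule pos_bca[OF n_234])
  have r_350: "pos p3 p5 p0 = pos p0 p3 p5" by (rule pos_bca[OF n_035])
  have r_351: "pos p3 p5 p1 = pos p1 p3 p5" by (rule pos_bca[OF n_135])
  have r_352: "pos p3 p5 p2 = pos p2 p3 p5" by (rule pos_bca[OF n_235])
  have r_354: "pos p3 p5 p4 = (\<not> pos p3 p4 p5)" by (rule pos_acb[OF n_345])
  have r_401: "pos p4 p0 p1 = pos p0 p1 p4" by (rule pos_cab[OF n_014])
  have r_402: "pos p4 p0 p2 = pos p0 p2 p4" by (rule pos_cab[OF n_024])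
  have r_403: "pos p4 p0 p3 = pos p0 p3 p4" by (rule pos_cab[OF n_034])
  have r_405: "pos p4 p0 p5 = (\<not> pos p0 p4 p5)" by (rule pos_bac[OF n_045])
  have r_410: "pos p4 p1 p0 = (\<not> pos p0 p1 p4)" by (rule pos_cba[OF n_014])
  have r_412: "pos p4 p1 p2 = pos p1 p2 p4" by (rule pos_cab[OF n_124])
  have r_413: "pos p4 p1 p3 = pos p1 p3 p4" by (rule pos_cab[OF n_134])
  have r_415: "pos p4 p1 p5 = (\<not> pos p1 p4 p5)" by (rule pos_bac[OF n_145])
  have r_420: "pos p4 p2 p0 = (\<not> pos p0 p2 p4)" by (rule pos_cba[OF n_024])
  have r_421: "pos p4 p2 p1 = (\<not> pos p1 p2 p4)" by (rule pos_cba[OF n_124])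
  have r_423: "pos p4 p2 p3 = pos p2 p3 p4" by (rule pos_cab[OF n_234])
  have r_425: "pos p4 p2 p5 = (\<not> pos p2 p4 p5)" by (rule pos_bac[OF n_245])
  have r_430: "pos p4 p3 p0 = (\<not> pos p0 p3 p4)" by (rule pos_cba[OF n_034])
  have r_431: "pos p4 p3 p1 = (\<not> pos p1 p3 p4)" by (rule pos_cba[OF n_134])
  have r_432: "pos p4 p3 p2 = (\<not> pos p2 p3 p4)" by (rule pos_cba[OF n_234])
  have r_435: "pos p4 p3 p5 = (\<not> pos p3 p4 p5)" by (rule pos_bac[OF n_345])
  have r_450: "pos p4 p5 p0 = pos p0 p4 p5" by (rule pos_bca[OF n_045])
  have r_451: "pos p4 p5 p1 = pos p1 p4 p5" by (rule pos_bca[OF n_145])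
  have r_452: "pos p4 p5 p2 = pos p2 p4 p5" by (rule pos_bca[OF n_245])
  have r_453: "pos p4 p5 p3 = pos p3 p4 p5" by (rule pos_bca[OF n_345])
  have r_501: "pos p5 p0 p1 = pos p0 p1 p5" by (rule pos_cab[OF n_015])
  have r_502: "pos p5 p0 p2 = pos p0 p2 p5" by (rule pos_cab[OF n_025])
  have r_503: "pos p5 p0 p3 = pos p0 p3 p5" by (rule pos_cab[OF n_035])
  have r_504: "pos p5 p0 p4 = pos p0 p4 p5" by (rule pos_cab[OF n_045])
  have r_510: "pos p5 p1 p0 = (\<not> pos p0 p1 p5)" by (rule pos_cba[OF n_015])
  have r_512: "pos p5 p1 p2 = pos p1 p2 p5" by (rule pos_cab[OF n_125])
  have r_513: "pos p5 p1 p3 = pos p1 p3 p5" by (rule pos_cab[OF n_135])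
  have r_514: "pos p5 p1 p4 = pos p1 p4 p5" by (rule pos_cab[OF n_145])
  have r_520: "pos p5 p2 p0 = (\<not> pos p0 p2 p5)" by (rule pos_cba[OF n_025])
  have r_521: "pos p5 p2 p1 = (\<not> pos p1 p2 p5)" by (rule pos_cba[OF n_125])
  have r_523: "pos p5 p2 p3 = pos p2 p3 p5" by (rule pos_cab[OF n_235])
  have r_524: "pos p5 p2 p4 = pos p2 p4 p5" by (rule pos_cab[OF n_245])
  have r_530: "pos p5 p3 p0 = (\<not> pos p0 p3 p5)" by (rule pos_cba[OF n_035])
  have r_531: "pos p5 p3 p1 = (\<not> pos p1 p3 p5)" by (rule pos_cba[OF n_135])
  have r_532: "pos p5 p3 p2 = (\<not> pos p2 p3 p5)" by (rule pos_cba[OF n_235])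
  have r_534: "pos p5 p3 p4 = pos p3 p4 p5" by (rule pos_cab[OF n_345])
  have r_540: "pos p5 p4 p0 = (\<not> pos p0 p4 p5)" by (rule pos_cba[OF n_045])
  have r_541: "pos p5 p4 p1 = (\<not> pos p1 p4 p5)" by (rule pos_cba[OF n_145])
  have r_542: "pos p5 p4 p2 = (\<not> pos p2 p4 p5)" by (rule pos_cba[OF n_245])
  have r_543: "pos p5 p4 p3 = (\<not> pos p3 p4 p5)" by (rule pos_cba[OF n_345])
  note g0 = gp_pos[OF n_201 n_245 n_204 n_215 n_205 n_214]
  note g1 = gp_pos[OF n_012 n_045 n_014 n_025 n_015 n_024]
  note g2 = gp_pos[OF n_302 n_345 n_304 n_325 n_305 n_324]
  note g3 = gp_pos[OF n_402 n_435 n_403 n_425 n_405 n_423]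
  note g4 = gp_pos[OF n_401 n_435 n_403 n_415 n_405 n_413]
  note g5 = gp_pos[OF n_512 n_534 n_513 n_524 n_514 n_523]
  note g6 = gp_pos[OF n_501 n_523 n_502 n_513 n_503 n_512]
  note g7 = gp_pos[OF n_102 n_145 n_104 n_125 n_105 n_124]
  note g8 = gp_pos[OF n_301 n_324 n_302 n_314 n_304 n_312]
  note g9 = gp_pos[OF n_201 n_234 n_203 n_214 n_204 n_213]
  note g10 = gp_pos[OF n_301 n_325 n_302 n_315 n_305 n_312]
  note g11 = gp_pos[OF n_301 n_345 n_304 n_315 n_305 n_314]
  note g12 = gp_pos[OF n_201 n_235 n_203 n_215 n_205 n_213]
  note g13 = gp_pos[OF n_123 n_145 n_124 n_135 n_125 n_134]
  note f0 = four_pos[OF n_345 n_145 n_135 n_134]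
  note cd_0314 = cross_pos[OF n_031 n_034 n_140 n_143 d_0314]
  note cd_0315 = cross_pos[OF n_031 n_035 n_150 n_153 d_0315]
  note cd_0413 = cross_pos[OF n_041 n_043 n_130 n_134 d_0413]
  note cd_0415 = cross_pos[OF n_041 n_045 n_150 n_154 d_0415]
  note cd_0513 = cross_pos[OF n_051 n_053 n_130 n_135 d_0513]
  note cd_0514 = cross_pos[OF n_051 n_054 n_140 n_145 d_0514]
  note cd_0324 = cross_pos[OF n_032 n_034 n_240 n_243 d_0324]
  note cd_0325 = cross_pos[OF n_032 n_035 n_250 n_253 d_0325]
  note cd_0423 = cross_pos[OF n_042 n_043 n_230 n_234 d_0423]
  note cd_0425 = cross_pos[OF n_042 n_045 n_250 n_254 d_0425]
  note cd_0523 = cross_pos[OF n_052 n_053 n_230 n_235 d_0523]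
  note cd_0524 = cross_pos[OF n_052 n_054 n_240 n_245 d_0524]
  note cd_1324 = cross_pos[OF n_132 n_134 n_241 n_243 d_1324]
  note cd_1325 = cross_pos[OF n_132 n_135 n_251 n_253 d_1325]
  note cd_1423 = cross_pos[OF n_142 n_143 n_231 n_234 d_1423]
  note cd_1425 = cross_pos[OF n_142 n_145 n_251 n_254 d_1425]
  note cd_1523 = cross_pos[OF n_152 n_153 n_231 n_235 d_1523]
  note cd_1524 = cross_pos[OF n_152 n_154 n_241 n_245 d_1524]
  note U0 = g0 g1 g2 g3 g4 g5 g6 g7 g8 g9 g10 g11 g12 g13 f0 cd_0314 cd_0315 cd_0413 cd_0415 cd_0513 cd_0514 cd_0324 cd_0325 cd_0423 cd_0425 cd_0523 cd_0524 cd_1324 cd_1325 cd_1423 cd_1425 cd_1523 cd_1524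
  note U = U0[unfolded r_021 r_031 r_032 r_041 r_042 r_043 r_051 r_052 r_053 r_054 r_102 r_103 r_104 r_105 r_120 r_130 r_132 r_140 r_142 r_143 r_150 r_152 r_153 r_154 r_201 r_203 r_204 r_205 r_210 r_213 r_214 r_215 r_230 r_231 r_240 r_241 r_243 r_250 r_251 r_253 r_254 r_301 r_302 r_304 r_305 r_310 r_312 r_314 r_315 r_320 r_321 r_324 r_325 r_340 r_341 r_342 r_350 r_351 r_352 r_354 r_401 r_402 r_403 r_405 r_410 r_412 r_413 r_415 r_420 r_421 r_423 r_425 r_430 r_431 r_432 r_435 r_450 r_451 r_452 r_453 r_501 r_502 r_503 r_504 r_510 r_512 r_513 r_514 r_520 r_521 r_523 r_524 r_530 r_531 r_532 r_534 r_540 r_541 r_542 r_543]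
  show False
    apply (rule core_prop[where Q012q="pos p0 p1 p2" and Q013q="pos p0 p1 p3" and Q014q="pos p0 p1 p4" and Q015q="pos p0 p1 p5" and Q023q="pos p0 p2 p3" and Q024q="pos p0 p2 p4" and Q025q="pos p0 p2 p5" and Q034q="pos p0 p3 p4" and Q035q="pos p0 p3 p5" and Q045q="pos p0 p4 p5" and Q123q="pos p1 p2 p3" and Q124q="pos p1 p2 p4" and Q125q="pos p1 p2 p5" and Q134q="pos p1 p3 p4" and Q135q="pos p1 p3 p5" and Q145q="pos p1 p4 p5" and Q234q="pos p2 p3 p4" and Q235q="pos p2 p3 p5" and Q245q="pos p2 p4 p5" and Q345q="pos p3 p4 p5"])
    subgoal using U(1) by blast
    subgoal using U(2) by blast
    subgoal using U(3) by blast
    subgoal using U(4) by blast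
    subgoal using U(5) by blast
    subgoal using U(6) by blast
    subgoal using U(7) by blast
    subgoal using U(8) by blast
    subgoal using U(9) by blast
    subgoal using U(10) by blast
    subgoal using U(11) by blast
    subgoal using U(12) by blast
    subgoal using U(13) by blast
    subgoal using U(14) by blast
    subgoal using U(15) by blast
    subgoal using U(16) by blast
    subgoal using U(17) by blast
    subgoal using U(18) by blast
    subgoal using U(19) by blast
    subgoal using U(20) by blast
    subgoal using U(21) by blast
    subgoal using U(22) by blast
    subgoal using U(23) by blast
    subgoal using U(24) by blast
    subgoal using U(25) by blast
    subgoal using U(26) by blast
    subgoal using U(27) by blast
    subgoal using U(28) by blast
    subgoal using U(29) by blast
    subgoal using U(30) by blast
    subgoal using U(31) by blast
    subgoal using U(32) by blast
    subgoal using U(33) by blast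
    done
qed

lemma quad_finite:
  fixes a0 b0 c0 :: real
  assumes "c0 \<noteq> 0"
  shows "finite {s. a0 + b0 * s + c0 * s^2 = 0}"
proof -
  have ne: "[:a0, b0, c0:] \<noteq> 0" using assms by simp
  have "{s. a0 + b0 * s + c0 * s^2 = 0} = {s. poly [:a0, b0, c0:] s = 0}"
    by (auto simp: algebra_simps power2_eq_square)
  then show ?thesis using poly_roots_finite[OF ne] by simp
qed

lemma Dt_perturb:
  "\<exists>K. \<forall>s. Dt (a + s *\<^sub>R u) (b + s *\<^sub>R v) (c + s *\<^sub>R w) = Dt a b c + K * s + Dt u v w * s^2"
proof -
  define K where "K = (fst b - fst a) * (snd w - snd u) + (fst v - fst u) * (snd c - snd a)
     - (snd b - snd a) * (fst w - fst u) - (snd v - snd u) * (fst c - fst a)"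
  show ?thesis
    by (rule exI[of _ K]) (simp add: K_def Dt_def algebra_simps power2_eq_square)
qed

lemma norm_pair_le: "norm ((x::real, y::real)) \<le> \<bar>x\<bar> + \<bar>y\<bar>"
proof -
  have "norm ((x, y)) = norm ((x, 0) + (0, y))" by simp
  also have "\<dots> \<le> norm ((x, 0::real)) + norm ((0::real, y))" by (rule norm_triangle_ineq)
  also have "\<dots> = \<bar>x\<bar> + \<bar>y\<bar>" by (simp add: norm_Pair)
  finally show ?thesis .
qed

lemma seg_perturb:
  fixes a x ma mx :: "real \<times> real"
  assumes "z \<in> closed_segment (a + s *\<^sub>R ma) (x + s *\<^sub>R mx)" "norm ma \<le> M" "norm mx \<le> M" "s \<ge> 0"
  shows "\<exists>z1\<in>closed_segment a x. dist z z1 \<le> s * M"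
proof -
  obtain u where u: "0 \<le> u" "u \<le> 1" "z = (1 - u) *\<^sub>R (a + s *\<^sub>R ma) + u *\<^sub>R (x + s *\<^sub>R mx)"
    using assms(1) by (auto simp: seg_mem)
  define z1 where "z1 = (1 - u) *\<^sub>R a + u *\<^sub>R x"
  have z1: "z1 \<in> closed_segment a x" unfolding z1_def seg_mem using u by blast
  have "z - z1 = s *\<^sub>R ((1 - u) *\<^sub>R ma + u *\<^sub>R mx)"
    unfolding u(3) z1_def by (simp add: algebra_simps)
  then have "dist z z1 = s * norm ((1 - u) *\<^sub>R ma + u *\<^sub>R mx)"
    using assms(4) by (simp add: dist_norm)
  also have "\<dots> \<le> s * ((1 - u) * M + u * M)"
  proof (rule mult_left_mono[OF _ assms(4)])
    have "norm ((1 - u) *\<^sub>R ma + u *\<^sub>R mx) \<le> norm ((1 - u) *\<^sub>R ma) + norm (u *\<^sub>R mx)"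
      by (rule norm_triangle_ineq)
    also have "\<dots> = (1 - u) * norm ma + u * norm mx" using u by simp
    also have "\<dots> \<le> (1 - u) * M + u * M"
      using u assms(2,3) by (intro add_mono mult_left_mono) auto
    finally show "norm ((1 - u) *\<^sub>R ma + u *\<^sub>R mx) \<le> (1 - u) * M + u * M" .
  qed
  also have "\<dots> = s * M" by (simp add: algebra_simps)
  finally show ?thesis using z1 by blast
qed

lemma setdist_seg_pos:
  fixes a b c d :: "real \<times> real"
  assumes "closed_segment a b \<inter> closed_segment c d = {}"
  shows "setdist (closed_segment a b) (closed_segment c d) > 0"
proof -
  obtain u v where uv: "u \<in> closed_segment a b" "v \<in> closed_segment c d"
    "dist u v = setdist (closed_segment a b) (closed_segment c d)"
    using setdist_compact_closed[of "closed_segment a b" "closed_segment c d"] by auto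
  have "u \<noteq> v" using uv assms by auto
  then have "dist u v > 0" by simp
  then show ?thesis using uv(3) by simp
qed

definition mpt :: "nat \<Rightarrow> real \<times> real" where "mpt i = (real i, (real i)^2)"

lemma Dt_mpt: "Dt (mpt i) (mpt j) (mpt k) = (real j - real i) * (real k - real i) * (real k - real j)"
  by (simp add: mpt_def Dt_def algebra_simps power2_eq_square)

lemma norm_mpt: assumes "i < 6" shows "norm (mpt i) \<le> 30"
proof -
  have h: "real i \<le> 5" "0 \<le> real i" using assms by simp_all
  have "(real i)^2 \<le> 5^2" using h by (intro power_mono) simp_all
  then have "\<bar>real i\<bar> + \<bar>(real i)^2\<bar> \<le> 30" using h by simp
  then show ?thesis using norm_pair_le[of "real i" "(real i)^2"] unfolding mpt_def by linarith
qed

lemma no_planar_K33: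
  fixes P :: "nat \<Rightarrow> real \<times> real"
  assumes dj: "\<And>a x b y. a < 3 \<Longrightarrow> b < 3 \<Longrightarrow> a \<noteq> b \<Longrightarrow> 3 \<le> x \<Longrightarrow> x < 6 \<Longrightarrow> 3 \<le> y \<Longrightarrow> y < 6 \<Longrightarrow> x \<noteq> y \<Longrightarrow>
      closed_segment (P a) (P x) \<inter> closed_segment (P b) (P y) = {}"
  shows False
proof -
  define Q where "Q = {(a, x, b, y) | a x b y. (a::nat) < 3 \<and> (x::nat) = x \<and> (b::nat) = b \<and> (y::nat) = y \<and> b < 3 \<and> a \<noteq> b \<and> 3 \<le> x \<and> x < 6 \<and> 3 \<le> y \<and> y < 6 \<and> x \<noteq> y}"
  have Qsub: "Q \<subseteq> {..<6} \<times> {..<6} \<times> {..<6} \<times> {..<6}" by (auto simp: Q_def)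
  have finQ: "finite Q" using finite_subset[OF Qsub] by auto
  have Qne: "(0, 3, 1, 4) \<in> Q" by (simp add: Q_def)
  define sd where "sd = (\<lambda>(a, x, b, y). setdist (closed_segment (P a) (P x)) (closed_segment (P b) (P y)))"
  have sdpos: "sd q > 0" if qQ: "q \<in> Q" for q
  proof -
    obtain a x b y where q: "q = (a, x, b, y)" "a < 3" "b < 3" "a \<noteq> b" "3 \<le> x" "x < 6" "3 \<le> y" "y < 6" "x \<noteq> y"
      using qQ unfolding Q_def by blast
    show ?thesis unfolding q(1) sd_def using setdist_seg_pos[OF dj[OF q(2-9)]] by simp
  qed
  define \<delta> where "\<delta> = Min (sd ` Q)"
  have \<delta>pos: "\<delta> > 0" unfolding \<delta>_def using finQ Qne sdpos by (subst Min_gr_iff) auto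
  have \<delta>le: "\<delta> \<le> sd q" if "q \<in> Q" for q unfolding \<delta>_def using finQ that by (intro Min_le) auto
  define T where "T = {(i, j, k) | i j k. (i::nat) < j \<and> (k::nat) = k \<and> (j::nat) = j \<and> j < k \<and> k < 6}"
  have Tsub: "T \<subseteq> {..<6} \<times> {..<6} \<times> {..<6}" by (auto simp: T_def)
  have finT: "finite T" using finite_subset[OF Tsub] by auto
  define Z where "Z = (\<lambda>(i, j, k). {s. Dt (P i + s *\<^sub>R mpt i) (P j + s *\<^sub>R mpt j) (P k + s *\<^sub>R mpt k) = 0})"
  have finZ: "finite (Z t)" if tT: "t \<in> T" for t
  proof -
    obtain i j k where t: "t = (i, j, k)" "i < j" "j < k" "k < 6" using tT unfolding T_def by blast
    obtain K where K: "\<forall>s. Dt (P i + s *\<^sub>R mpt i) (P j + s *\<^sub>R mpt j) (P k + s *\<^sub>R mpt k)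
        = Dt (P i) (P j) (P k) + K * s + Dt (mpt i) (mpt j) (mpt k) * s^2"
      using Dt_perturb by blast
    have c0: "Dt (mpt i) (mpt j) (mpt k) \<noteq> 0" using t by (simp add: Dt_mpt)
    have "Z t = {s. Dt (P i) (P j) (P k) + K * s + Dt (mpt i) (mpt j) (mpt k) * s^2 = 0}"
      using K t(1) by (simp add: Z_def)
    then show ?thesis using quad_finite[OF c0] by simp
  qed
  define F where "F = \<Union> (Z ` T)"
  have finF: "finite F" unfolding F_def using finT finZ by blast
  have "infinite ({0<..<\<delta>/60} - F)"
    using Diff_infinite_finite[OF finF] \<delta>pos by simp
  then obtain s where s: "s \<in> {0<..<\<delta>/60}" "s \<notin> F"
    by (metis Diff_iff finite.emptyI ex_in_conv)
  define p where "p i = P i + s *\<^sub>R mpt i" for i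
  have nz: "Dt (p i) (p j) (p k) \<noteq> 0" if "i < j" "j < k" "k < 6" for i j k
  proof -
    have "(i, j, k) \<in> T" using that by (simp add: T_def)
    then have "s \<notin> Z (i, j, k)" using s(2) unfolding F_def by blast
    then show ?thesis by (simp add: Z_def p_def)
  qed
  have dj': "closed_segment (p a) (p x) \<inter> closed_segment (p b) (p y) = {}" if q: "(a, x, b, y) \<in> Q" for a x b y
  proof (rule ccontr)
    assume "closed_segment (p a) (p x) \<inter> closed_segment (p b) (p y) \<noteq> {}"
    then obtain z where z: "z \<in> closed_segment (p a) (p x)" "z \<in> closed_segment (p b) (p y)" by blast
    have lt: "a < 6" "x < 6" "b < 6" "y < 6" using q by (auto simp: Q_def)
    have s0: "s \<ge> 0" using s by simp
    obtain z1 where z1: "z1 \<in> closed_segment (P a) (P x)" "dist z z1 \<le> s * 30"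
      using seg_perturb[OF z(1)[unfolded p_def] norm_mpt[OF lt(1)] norm_mpt[OF lt(2)] s0] by blast
    obtain z2 where z2: "z2 \<in> closed_segment (P b) (P y)" "dist z z2 \<le> s * 30"
      using seg_perturb[OF z(2)[unfolded p_def] norm_mpt[OF lt(3)] norm_mpt[OF lt(4)] s0] by blast
    have "dist z1 z2 \<le> dist z z1 + dist z z2" by (rule dist_triangle3)
    also have "\<dots> \<le> s * 60" using z1 z2 by simp
    also have "\<dots> < \<delta>" using s by simp
    also have "\<dots> \<le> sd (a, x, b, y)" using \<delta>le[OF q] .
    also have "\<dots> \<le> dist z1 z2" unfolding sd_def using z1(1) z2(1) by (simp add: setdist_le_dist)
    finally show False by simp
  qed
  have N_012: "Dt (p 0) (p 1) (p 2) \<noteq> 0" by (rule nz) simp_all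
  have N_013: "Dt (p 0) (p 1) (p 3) \<noteq> 0" by (rule nz) simp_all
  have N_014: "Dt (p 0) (p 1) (p 4) \<noteq> 0" by (rule nz) simp_all
  have N_015: "Dt (p 0) (p 1) (p 5) \<noteq> 0" by (rule nz) simp_all
  have N_023: "Dt (p 0) (p 2) (p 3) \<noteq> 0" by (rule nz) simp_all
  have N_024: "Dt (p 0) (p 2) (p 4) \<noteq> 0" by (rule nz) simp_all
  have N_025: "Dt (p 0) (p 2) (p 5) \<noteq> 0" by (rule nz) simp_all
  have N_034: "Dt (p 0) (p 3) (p 4) \<noteq> 0" by (rule nz) simp_all
  have N_035: "Dt (p 0) (p 3) (p 5) \<noteq> 0" by (rule nz) simp_all
  have N_045: "Dt (p 0) (p 4) (p 5) \<noteq> 0" by (rule nz) simp_all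
  have N_123: "Dt (p 1) (p 2) (p 3) \<noteq> 0" by (rule nz) simp_all
  have N_124: "Dt (p 1) (p 2) (p 4) \<noteq> 0" by (rule nz) simp_all
  have N_125: "Dt (p 1) (p 2) (p 5) \<noteq> 0" by (rule nz) simp_all
  have N_134: "Dt (p 1) (p 3) (p 4) \<noteq> 0" by (rule nz) simp_all
  have N_135: "Dt (p 1) (p 3) (p 5) \<noteq> 0" by (rule nz) simp_all
  have N_145: "Dt (p 1) (p 4) (p 5) \<noteq> 0" by (rule nz) simp_all
  have N_234: "Dt (p 2) (p 3) (p 4) \<noteq> 0" by (rule nz) simp_all
  have N_235: "Dt (p 2) (p 3) (p 5) \<noteq> 0" by (rule nz) simp_all
  have N_245: "Dt (p 2) (p 4) (p 5) \<noteq> 0" by (rule nz) simp_all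
  have N_345: "Dt (p 3) (p 4) (p 5) \<noteq> 0" by (rule nz) simp_all
  have D_0314: "closed_segment (p 0) (p 3) \<inter> closed_segment (p 1) (p 4) = {}" by (rule dj') (simp add: Q_def)
  have D_0315: "closed_segment (p 0) (p 3) \<inter> closed_segment (p 1) (p 5) = {}" by (rule dj') (simp add: Q_def)
  have D_0413: "closed_segment (p 0) (p 4) \<inter> closed_segment (p 1) (p 3) = {}" by (rule dj') (simp add: Q_def)
  have D_0415: "closed_segment (p 0) (p 4) \<inter> closed_segment (p 1) (p 5) = {}" by (rule dj') (simp add: Q_def)
  have D_0513: "closed_segment (p 0) (p 5) \<inter> closed_segment (p 1) (p 3) = {}" by (rule dj') (simp add: Q_def)
  have D_0514: "closed_segment (p 0) (p 5) \<inter> closed_segment (p 1) (p 4) = {}" by (rule dj') (simp add: Q_def)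
  have D_0324: "closed_segment (p 0) (p 3) \<inter> closed_segment (p 2) (p 4) = {}" by (rule dj') (simp add: Q_def)
  have D_0325: "closed_segment (p 0) (p 3) \<inter> closed_segment (p 2) (p 5) = {}" by (rule dj') (simp add: Q_def)
  have D_0423: "closed_segment (p 0) (p 4) \<inter> closed_segment (p 2) (p 3) = {}" by (rule dj') (simp add: Q_def)
  have D_0425: "closed_segment (p 0) (p 4) \<inter> closed_segment (p 2) (p 5) = {}" by (rule dj') (simp add: Q_def)
  have D_0523: "closed_segment (p 0) (p 5) \<inter> closed_segment (p 2) (p 3) = {}" by (rule dj') (simp add: Q_def)
  have D_0524: "closed_segment (p 0) (p 5) \<inter> closed_segment (p 2) (p 4) = {}" by (rule dj') (simp add: Q_def)
  have D_1324: "closed_segment (p 1) (p 3) \<inter> closed_segment (p 2) (p 4) = {}" by (rule dj') (simp add: Q_def)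
  have D_1325: "closed_segment (p 1) (p 3) \<inter> closed_segment (p 2) (p 5) = {}" by (rule dj') (simp add: Q_def)
  have D_1423: "closed_segment (p 1) (p 4) \<inter> closed_segment (p 2) (p 3) = {}" by (rule dj') (simp add: Q_def)
  have D_1425: "closed_segment (p 1) (p 4) \<inter> closed_segment (p 2) (p 5) = {}" by (rule dj') (simp add: Q_def)
  have D_1523: "closed_segment (p 1) (p 5) \<inter> closed_segment (p 2) (p 3) = {}" by (rule dj') (simp add: Q_def)
  have D_1524: "closed_segment (p 1) (p 5) \<inter> closed_segment (p 2) (p 4) = {}" by (rule dj') (simp add: Q_def)
  show False by (rule core_K33[OF N_012 N_013 N_014 N_015 N_023 N_024 N_025 N_034 N_035 N_045 N_123 N_124 N_125 N_134 N_135 N_145 N_234 N_235 N_245 N_345 D_0314 D_0315 D_0413 D_0415 D_0513 D_0514 D_0324 D_0325 D_0423 D_0425 D_0523 D_0524 D_1324 D_1325 D_1423 D_1425 D_1523 D_1524])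
qed

definition XS :: "int list" where "XS = [-319, 415, 236, 257, -374, -426, 341, 845, -251, -623, -65, -136]"
definition YS :: "int list" where "YS = [128, -387, 124, -171, 368, 467, 183, 190, -380, -541, -218, 147]"
definition CL :: "nat list" where "CL = [0, 0, 1, 0, 1, 0, 1, 0, 1, 0, 1, 1, 1, 0, 0, 0, 0, 1, 1, 0, 0, 0, 0, 1, 0, 0, 1, 0, 1, 0, 1, 1, 1, 0, 1, 1]"

definition Di :: "nat \<Rightarrow> nat \<Rightarrow> nat \<Rightarrow> int" where
  "Di a b c = (XS!b - XS!a) * (YS!c - YS!a) - (YS!b - YS!a) * (XS!c - XS!a)"

definition gp_check :: bool where
  "gp_check = list_all (\<lambda>a. list_all (\<lambda>b. list_all (\<lambda>c. a = b \<or> b = c \<or> a = c \<or> Di a b c \<noteq> 0) [0..<12]) [0..<12]) [0..<12]"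

definition pair_check :: bool where
  "pair_check = list_all (\<lambda>i. list_all (\<lambda>j. list_all (\<lambda>i'. list_all (\<lambda>j'.
      CL!(i*6+j) \<noteq> CL!(i'*6+j') \<or> i = i' \<or> j = j' \<or>
      Di i (j+6) i' * Di i (j+6) (j'+6) > 0 \<or> Di i' (j'+6) i * Di i' (j'+6) (j+6) > 0) [0..<6]) [0..<6]) [0..<6]) [0..<6]"

lemma gp_check_true: gp_check
  unfolding gp_check_def Di_def XS_def YS_def by code_simp

lemma pair_check_true: pair_check
  unfolding pair_check_def Di_def XS_def YS_def CL_def by code_simp

definition cl_check :: bool where
  "cl_check = list_all (\<lambda>k. CL!k \<le> 1) [0..<36]"

lemma cl_check_true: cl_check
  unfolding cl_check_def CL_def by code_simp

lemma cl01: "i < 6 \<Longrightarrow> j < 6 \<Longrightarrow> CL!(i*6+j) \<le> 1"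
proof -
  assume "i < 6" "j < 6"
  then have "i*6+j < 36" by linarith
  then show ?thesis using cl_check_true unfolding cl_check_def list_all_iff by auto
qed

definition Pt :: "nat \<Rightarrow> real \<times> real" where "Pt k = (of_int (XS!k), of_int (YS!k))"

lemma Dt_Pt: "Dt (Pt a) (Pt b) (Pt c) = of_int (Di a b c)"
  by (simp add: Dt_def Pt_def Di_def)

lemma gp_fact:
  assumes "a < 12" "b < 12" "c < 12" "a \<noteq> b" "b \<noteq> c" "a \<noteq> c"
  shows "Dt (Pt a) (Pt b) (Pt c) \<noteq> 0"
proof -
  have H: "\<forall>a\<in>{0..<12}. \<forall>b\<in>{0..<12}. \<forall>c\<in>{0..<12}. a = b \<or> b = c \<or> a = c \<or> Di a b c \<noteq> 0"
    using gp_check_true unfolding gp_check_def list_all_iff set_upt .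
  have m: "a \<in> {0..<12}" "b \<in> {0..<12}" "c \<in> {0..<12}" using assms by auto
  have "a = b \<or> b = c \<or> a = c \<or> Di a b c \<noteq> 0" using H m by blast
  then have "Di a b c \<noteq> 0" using assms by blast
  then show ?thesis by (simp add: Dt_Pt)
qed

lemma pair_fact:
  assumes "i < 6" "j < 6" "i' < 6" "j' < 6" "CL!(i*6+j) = CL!(i'*6+j')" "i \<noteq> i'" "j \<noteq> j'"
  shows "closed_segment (Pt i) (Pt (j+6)) \<inter> closed_segment (Pt i') (Pt (j'+6)) = {}"
proof -
  have "Di i (j+6) i' * Di i (j+6) (j'+6) > 0 \<or> Di i' (j'+6) i * Di i' (j'+6) (j+6) > 0"
  proof -
    have H: "\<forall>i\<in>{0..<6}. \<forall>j\<in>{0..<6}. \<forall>i'\<in>{0..<6}. \<forall>j'\<in>{0..<6}.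
      CL!(i*6+j) \<noteq> CL!(i'*6+j') \<or> i = i' \<or> j = j' \<or>
      Di i (j+6) i' * Di i (j+6) (j'+6) > 0 \<or> Di i' (j'+6) i * Di i' (j'+6) (j+6) > 0"
      using pair_check_true unfolding pair_check_def list_all_iff set_upt .
    have m: "i \<in> {0..<6}" "j \<in> {0..<6}" "i' \<in> {0..<6}" "j' \<in> {0..<6}" using assms by auto
    have "CL!(i*6+j) \<noteq> CL!(i'*6+j') \<or> i = i' \<or> j = j' \<or>
      Di i (j+6) i' * Di i (j+6) (j'+6) > 0 \<or> Di i' (j'+6) i * Di i' (j'+6) (j+6) > 0"
      using H m by blast
    then show ?thesis using assms by blast
  qed
  then show ?thesis
  proof
    assume "Di i (j+6) i' * Di i (j+6) (j'+6) > 0"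
    then have "Dt (Pt i) (Pt (j+6)) (Pt i') * Dt (Pt i) (Pt (j+6)) (Pt (j'+6)) > 0"
      unfolding Dt_Pt by (metis of_int_0_less_iff of_int_mult)
    then show ?thesis by (rule sep_disjoint)
  next
    assume "Di i' (j'+6) i * Di i' (j'+6) (j+6) > 0"
    then have "Dt (Pt i') (Pt (j'+6)) (Pt i) * Dt (Pt i') (Pt (j'+6)) (Pt (j+6)) > 0"
      unfolding Dt_Pt by (metis of_int_0_less_iff of_int_mult)
    then show ?thesis using sep_disjoint by blast
  qed
qed

lemma Pt_inj: assumes "a < 12" "b < 12" "Pt a = Pt b" shows "a = b"
proof (rule ccontr)
  assume ne: "a \<noteq> b"
  obtain c where c: "c < 12" "c \<noteq> a" "c \<noteq> b"
  proof (cases "a = 0 \<or> b = 0")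
    case True
    show ?thesis
    proof (cases "a = 1 \<or> b = 1")
      case True
      then show ?thesis using \<open>a = 0 \<or> b = 0\<close> that[of 2] by auto
    next
      case False
      then show ?thesis using that[of 1] by auto
    qed
  next
    case False
    then show ?thesis using that[of 0] by auto
  qed
  have "Dt (Pt a) (Pt b) (Pt c) \<noteq> 0" using gp_fact[OF assms(1,2) c(1) ne] c by auto
  moreover have "Dt (Pt a) (Pt b) (Pt c) = 0" using assms(3) by (simp add: Dt_def)
  ultimately show False by simp
qed

definition vidx :: "nat + nat \<Rightarrow> nat" where "vidx v = (case v of Inl i \<Rightarrow> i | Inr j \<Rightarrow> j + 6)"
definition pp :: "nat + nat \<Rightarrow> real \<times> real" where "pp v = Pt (vidx v)"
definition LL :: "(nat + nat) set \<Rightarrow> nat" where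
  "LL e = (if \<exists>i j. e = {Inl i, Inr j} \<and> CL!(i*6+j) = 1 then 1 else 0)"

lemma LL_edge: assumes "i < 6" "j < 6" shows "LL {Inl i, Inr j} = CL!(i*6+j)"
proof -
  have "(\<exists>i' j'. {Inl i, Inr j} = {Inl i', Inr j'} \<and> CL!(i'*6+j') = 1) \<longleftrightarrow> CL!(i*6+j) = 1"
    by (auto simp: doubleton_eq_iff)
  then show ?thesis using cl01[OF assms] unfolding LL_def by auto
qed

lemma edge_seg_pp: "edge_seg pp {Inl i, Inr j} = closed_segment (Pt i) (Pt (j+6))"
  by (simp add: edge_seg_def segment_convex_hull pp_def vidx_def)

lemma K66_E_iff: "e \<in> K66_E \<longleftrightarrow> (\<exists>i j. e = {Inl i, Inr j} \<and> i < 6 \<and> j < 6)"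
  by (auto simp: K66_E_def)

lemma K66_V_vidx: "v \<in> K66_V \<Longrightarrow> vidx v < 12"
  by (auto simp: K66_V_def vidx_def)

lemma vidx_inj: "vidx v = vidx w \<Longrightarrow> v \<in> K66_V \<Longrightarrow> w \<in> K66_V \<Longrightarrow> v = w"
  by (auto simp: K66_V_def vidx_def)

lemma layered2: "geom_layered K66_V K66_E 2"
  unfolding geom_layered_def
proof (intro exI[of _ pp] exI[of _ LL] conjI ballI impI)
  show "inj_on pp K66_V"
  proof (rule inj_onI)
    fix v w assume vw: "v \<in> K66_V" "w \<in> K66_V" "pp v = pp w"
    then have "vidx v = vidx w" using Pt_inj K66_V_vidx unfolding pp_def by blast
    then show "v = w" using vidx_inj vw by blast
  qed
next
  fix e w assume e: "e \<in> K66_E" and w: "w \<in> K66_V" "w \<notin> e"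
  obtain i j where ij: "e = {Inl i, Inr j}" "i < 6" "j < 6" using e K66_E_iff by blast
  have wi: "vidx w \<noteq> i" "vidx w \<noteq> j + 6" using w ij by (auto simp: K66_V_def vidx_def)
  have "Dt (Pt i) (Pt (j+6)) (Pt (vidx w)) \<noteq> 0"
    using gp_fact[of i "j+6" "vidx w"] ij wi K66_V_vidx[OF w(1)] by auto
  then show "pp w \<notin> edge_seg pp e" unfolding ij(1) edge_seg_pp pp_def by (rule not_on_seg)
next
  fix e assume "e \<in> K66_E"
  show "LL e < 2" unfolding LL_def by simp
next
  fix e e' assume e: "e \<in> K66_E" and e': "e' \<in> K66_E" and h: "e \<noteq> e' \<and> LL e = LL e'"
  obtain i j where ij: "e = {Inl i, Inr j}" "i < 6" "j < 6" using e K66_E_iff by blast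
  obtain i' j' where ij': "e' = {Inl i', Inr j'}" "i' < 6" "j' < 6" using e' K66_E_iff by blast
  have cl: "CL!(i*6+j) = CL!(i'*6+j')" using h ij ij' LL_edge by metis
  show "edge_seg pp e \<inter> edge_seg pp e' \<subseteq> pp ` (e \<inter> e')"
  proof (cases "i = i'")
    case True
    then have jj: "j \<noteq> j'" using h ij ij' by auto
    have "Dt (Pt i) (Pt (j+6)) (Pt (j'+6)) \<noteq> 0" using gp_fact[of i "j+6" "j'+6"] ij ij' jj by auto
    then have "closed_segment (Pt i) (Pt (j+6)) \<inter> closed_segment (Pt i) (Pt (j'+6)) \<subseteq> {Pt i}"
      by (rule adj_seg)
    moreover have "Pt i \<in> pp ` (e \<inter> e')"
      using True ij ij' by (auto simp: pp_def vidx_def image_iff intro!: bexI[of _ "Inl i"])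
    ultimately show ?thesis unfolding ij(1) ij'(1) edge_seg_pp using True by auto
  next
    case False
    show ?thesis
    proof (cases "j = j'")
      case True
      have "Dt (Pt (j+6)) (Pt i) (Pt i') \<noteq> 0" using gp_fact[of "j+6" i i'] ij ij' False by auto
      then have "closed_segment (Pt (j+6)) (Pt i) \<inter> closed_segment (Pt (j+6)) (Pt i') \<subseteq> {Pt (j+6)}"
        by (rule adj_seg)
      moreover have "Pt (j+6) \<in> pp ` (e \<inter> e')"
        using True ij ij' by (auto simp: pp_def vidx_def image_iff intro!: bexI[of _ "Inr j"])
      ultimately show ?thesis unfolding ij(1) ij'(1) edge_seg_pp using True
        by (auto simp: closed_segment_commute)
    next
      case jj: False
      have "closed_segment (Pt i) (Pt (j+6)) \<inter> closed_segment (Pt i') (Pt (j'+6)) = {}"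
        using pair_fact[OF ij(2,3) ij'(2,3) cl False jj] .
      then show ?thesis unfolding ij(1) ij'(1) edge_seg_pp by simp
    qed
  qed
qed

lemma layered_D:
  assumes "geom_layered V E k"
  obtains p L where "\<forall>e\<in>E. L e < k"
    "\<forall>e\<in>E. \<forall>e'\<in>E. e \<noteq> e' \<and> L e = L e' \<longrightarrow> edge_seg p e \<inter> edge_seg p e' \<subseteq> p ` (e \<inter> e')"
  using assms unfolding geom_layered_def
  apply (elim exE conjE)
  apply (rule that)
   apply assumption+
  done

lemma not_layered0: "\<not> geom_layered K66_V K66_E 0"
proof
  assume "geom_layered K66_V K66_E 0"
  then obtain p :: "nat + nat \<Rightarrow> real \<times> real" and L :: "(nat + nat) set \<Rightarrow> nat" where
    "\<forall>e\<in>K66_E. L e < 0"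
    "\<forall>e\<in>K66_E. \<forall>e'\<in>K66_E. e \<noteq> e' \<and> L e = L e' \<longrightarrow> edge_seg p e \<inter> edge_seg p e' \<subseteq> p ` (e \<inter> e')"
    by (rule layered_D)
  moreover have "{Inl 0, Inr 0} \<in> K66_E" unfolding K66_E_def
    by (intro CollectI exI[of _ "0::nat"]) simp
  ultimately show False by blast
qed

lemma not_layered1: "\<not> geom_layered K66_V K66_E 1"
proof
  assume "geom_layered K66_V K66_E 1"
  then obtain p :: "nat + nat \<Rightarrow> real \<times> real" and L :: "(nat + nat) set \<Rightarrow> nat" where
    L1: "\<forall>e\<in>K66_E. L e < 1" and
    cr: "\<forall>e\<in>K66_E. \<forall>e'\<in>K66_E. e \<noteq> e' \<and> L e = L e' \<longrightarrow> edge_seg p e \<inter> edge_seg p e' \<subseteq> p ` (e \<inter> e')"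
    by (rule layered_D)
  define P where "P n = (if n < 3 then p (Inl n) else p (Inr (n - 3)))" for n
  show False
  proof (rule no_planar_K33[of P])
    fix a x b y :: nat
    assume h: "a < 3" "b < 3" "a \<noteq> b" "3 \<le> x" "x < 6" "3 \<le> y" "y < 6" "x \<noteq> y"
    define e where "e = {Inl a, Inr (x - 3)}"
    define e' where "e' = {Inl b, Inr (y - 3)}"
    have eE: "e \<in> K66_E" unfolding e_def K66_E_def using h
      by (intro CollectI exI[of _ a] exI[of _ "x - 3"]) simp
    have eE': "e' \<in> K66_E" unfolding e'_def K66_E_def using h
      by (intro CollectI exI[of _ b] exI[of _ "y - 3"]) simp
    have ne: "e \<noteq> e'"
    proof
      assume "e = e'"
      then have "Inl a \<in> e'" unfolding e_def by auto
      then show False using h unfolding e'_def by auto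
    qed
    have "L e < 1" "L e' < 1" using L1 eE eE' by blast+
    then have LL: "L e = L e'" by simp
    have int: "e \<inter> e' = {}" using h unfolding e_def e'_def by auto
    have "edge_seg p e \<inter> edge_seg p e' \<subseteq> p ` (e \<inter> e')" using cr eE eE' ne LL by blast
    then have "edge_seg p e \<inter> edge_seg p e' \<subseteq> {}" unfolding int by simp
    moreover have "edge_seg p e = closed_segment (P a) (P x)"
      using h unfolding e_def edge_seg_def P_def by (simp add: segment_convex_hull)
    moreover have "edge_seg p e' = closed_segment (P b) (P y)"
      using h unfolding e'_def edge_seg_def P_def by (simp add: segment_convex_hull)
    ultimately show "closed_segment (P a) (P x) \<inter> closed_segment (P b) (P y) = {}" by simp
  qed
qed

theorem mainTheorem9:
  shows "geometric_thickness K66_V K66_E = 2"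
  unfolding geometric_thickness_def
proof (rule Least_equality)
  show "geom_layered K66_V K66_E 2" by (rule layered2)
next
  fix y assume "geom_layered K66_V K66_E y"
  show "2 \<le> y"
  proof (rule ccontr)
    assume "\<not> 2 \<le> y"
    then have "y = 0 \<or> y = 1" by auto
    then show False using not_layered0 not_layered1 \<open>geom_layered K66_V K66_E y\<close> by auto
  qed
qed

end
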